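(* The Markov spectrum $\mathcal{M}$ of $\mathbb{Q}((1/T))$ equals $$\{M(A): A=(g_i)_{i\in\mathbb{Z}} \text{ a doubly infinite sequence of polynomials } g_i\in\mathbb{Q}[T] \text{ with } \deg g_i\ge1\}.$$
   Context: $\mathbb{Q}((1/T))$ is the field of formal Laurent series in $1/T$ over $\mathbb{Q}$; $\deg$ of a nonzero series is the exponent of its leading term, $\deg0=-\infty$. For polynomials $c_0,c_1,\dots$ with $\deg c_j\ge1$ for $j\ge1$, $[c_0,c_1,\dots]=c_0+1/(c_1+1/(c_2+\cdots))$ converges in $\mathbb{Q}((1/T))$. For a doubly infinite sequence $A=(g_i)_{i\in\mathbb{Z}}$ of polynomials of positive degree, $\lambda_i(A)=[g_i,g_{i+1},\dots]+[0,g_{i-1},g_{i-2},\dots]$ and $M(A)=\sup_{i\in\mathbb{Z}}\deg\lambda_i(A)\in\mathbb{Z}\cup\{\infty\}$. A binary quadratic form is $Q=AX^2+BXY+CY^2$ with $A,B,C\in\mathbb{Q}((1/T))$ not all in $\mathbb{Q}(T)$, discriminant $D=B^2-4AC$; it is indefinite if $D\ne0$ is a square in $\mathbb{Q}((1/T))$. $m(Q)=\inf\{\deg Q(X,Y):X,Y\in\mathbb{Q}[T],(X,Y)\ne(0,0)\}$, and $\mathcal{M}=\{\tfrac{\deg D}{2}-m(Q):Q\text{ indefinite}\}$, with value $+\infty$ when $m(Q)=-\infty$. *)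

theory Defs
  imports "HOL-Computational_Algebra.Polynomial" "HOL-Computational_Algebra.Formal_Laurent_Series"
    "HOL-Library.Extended_Real"
begin

text \<open>We model Q((1/T)) as rat fls (Laurent series in X with finitely many negative powers),
  with X = 1/T, so T corresponds to fls_X_inv.\<close>

definition deg :: "rat fls \<Rightarrow> ereal" where
  "deg f = (if f = 0 then -\<infinity> else ereal (of_int (- fls_subdegree f)))"

definition polyT :: "rat poly \<Rightarrow> rat fls" where
  "polyT p = (\<Sum>i\<le>degree p. fls_const (coeff p i) * fls_X_inv ^ i)"

definition ratfunT :: "rat fls set" where
  "ratfunT = {polyT p / polyT q | p q. q \<noteq> 0}"

primrec cfrac_fin :: "(nat \<Rightarrow> rat fls) \<Rightarrow> nat \<Rightarrow> rat fls" where
  "cfrac_fin c 0 = c 0"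
| "cfrac_fin c (Suc n) = c 0 + inverse (cfrac_fin (\<lambda>k. c (Suc k)) n)"

definition cfrac :: "(nat \<Rightarrow> rat poly) \<Rightarrow> rat fls" where
  "cfrac c = (THE f. \<forall>N::int. eventually
      (\<lambda>n. deg (f - cfrac_fin (\<lambda>k. polyT (c k)) n) < ereal (of_int N)) sequentially)"

definition lambda_seq :: "(int \<Rightarrow> rat poly) \<Rightarrow> int \<Rightarrow> rat fls" where
  "lambda_seq A i = cfrac (\<lambda>k. A (i + int k))
      + cfrac (\<lambda>k. if k = 0 then 0 else A (i - int k))"

definition markovM :: "(int \<Rightarrow> rat poly) \<Rightarrow> ereal" where
  "markovM A = (SUP i. deg (lambda_seq A i))"

definition disc :: "rat fls \<Rightarrow> rat fls \<Rightarrow> rat fls \<Rightarrow> rat fls" where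
  "disc a b c = b^2 - 4 * a * c"

definition is_form :: "rat fls \<Rightarrow> rat fls \<Rightarrow> rat fls \<Rightarrow> bool" where
  "is_form a b c \<longleftrightarrow> \<not> (a \<in> ratfunT \<and> b \<in> ratfunT \<and> c \<in> ratfunT)"

definition indefinite :: "rat fls \<Rightarrow> rat fls \<Rightarrow> rat fls \<Rightarrow> bool" where
  "indefinite a b c \<longleftrightarrow> disc a b c \<noteq> 0 \<and> (\<exists>s. s^2 = disc a b c)"

definition min_form :: "rat fls \<Rightarrow> rat fls \<Rightarrow> rat fls \<Rightarrow> ereal" where
  "min_form a b c = (INF xy \<in> {(x, y). (x, y) \<noteq> (0::rat poly, 0::rat poly)}.
      deg (a * polyT (fst xy)^2 + b * polyT (fst xy) * polyT (snd xy) + c * polyT (snd xy)^2))"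

definition markov_spectrum :: "ereal set" where
  "markov_spectrum = {deg (disc a b c) / 2 - min_form a b c | a b c.
      is_form a b c \<and> indefinite a b c}"

end

theory Submission
  imports Defs
begin


definition vanish :: "rat fls \<Rightarrow> int \<Rightarrow> bool" where
  "vanish f N \<longleftrightarrow> (\<forall>j\<le>N. fls_nth f j = 0)"

lemma vanish_add: "vanish f N \<Longrightarrow> vanish g N \<Longrightarrow> vanish (f + g) N"
  by (simp add: vanish_def)
lemma vanish_diff: "vanish f N \<Longrightarrow> vanish g N \<Longrightarrow> vanish (f - g) N"
  by (simp add: vanish_def)
lemma vanish_uminus: "vanish f N \<Longrightarrow> vanish (- f) N"
  by (simp add: vanish_def)
lemma vanish_mono: "vanish f N \<Longrightarrow> M \<le> N \<Longrightarrow> vanish f M"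
  by (simp add: vanish_def)
lemma vanish_zero[simp]: "vanish 0 N"
  by (simp add: vanish_def)

lemma vanish_subdeg: "f \<noteq> 0 \<Longrightarrow> vanish f N \<longleftrightarrow> N < fls_subdegree f"
proof
  assume "f \<noteq> 0" "vanish f N"
  then show "N < fls_subdegree f"
    using fls_subdegree_geI[of f "N+1"] unfolding vanish_def by fastforce
next
  assume "N < fls_subdegree f" then show "vanish f N" by (simp add: vanish_def)
qed

lemma vanish_subdegI: "(f \<noteq> 0 \<Longrightarrow> N < fls_subdegree f) \<Longrightarrow> vanish f N"
  by (cases "f = 0") (auto simp: vanish_subdeg)

lemma vanish_mult: "vanish f N \<Longrightarrow> (g \<noteq> 0 \<Longrightarrow> M \<le> fls_subdegree g) \<Longrightarrow> vanish (f * g) (N + M)"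
proof (cases "f = 0 \<or> g = 0")
  case False
  assume "vanish f N" "(g \<noteq> 0 \<Longrightarrow> M \<le> fls_subdegree g)"
  with False have "N < fls_subdegree f" "M \<le> fls_subdegree g" using vanish_subdeg by auto
  then show ?thesis using False by (intro vanish_subdegI) simp
qed auto

lemma vanish_zero_iff: "(\<forall>N. vanish f N) \<longleftrightarrow> f = 0"
proof
  assume "\<forall>N. vanish f N"
  then show "f = 0" by (intro fls_zero_eqI) (auto simp: vanish_def)
qed auto

lemma deg_less_iff: "deg g < ereal (of_int N) \<longleftrightarrow> vanish g (- N)"
proof (cases "g = 0")
  case False
  then show ?thesis by (auto simp: deg_def vanish_subdeg)
qed (simp add: deg_def)

lemma deg_nonzero: "f \<noteq> 0 \<Longrightarrow> deg f = ereal (of_int (- fls_subdegree f))"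
  by (simp add: deg_def)

lemma deg_cases: "deg f = -\<infinity> \<or> (\<exists>z::int. deg f = ereal (of_int z))"
  by (auto simp: deg_def intro!: exI[of _ "- fls_subdegree f"])

lemma polyT_nth: "fls_nth (polyT p) n = (if n \<le> 0 then coeff p (nat (- n)) else 0)"
proof -
  have "fls_nth (polyT p) n = (\<Sum>i\<le>degree p. coeff p i * (if n = - int i then 1 else 0))"
    unfolding polyT_def fls_nth_sum by simp
  also have "\<dots> = (\<Sum>i\<le>degree p. if i = nat (-n) \<and> n \<le> 0 then coeff p i else 0)"
    by (intro sum.cong) auto
  also have "\<dots> = (if n \<le> 0 then coeff p (nat (- n)) else 0)"
    by (auto simp: coeff_eq_0 sum.delta)
  finally show ?thesis .
qed

lemma polyT_add: "polyT (p + q) = polyT p + polyT q"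
  by (rule fls_eqI) (simp add: polyT_nth)
lemma polyT_diff: "polyT (p - q) = polyT p - polyT q"
  by (rule fls_eqI) (simp add: polyT_nth)
lemma polyT_uminus: "polyT (- p) = - polyT p"
  by (rule fls_eqI) (simp add: polyT_nth)
lemma polyT_0[simp]: "polyT 0 = 0"
  by (rule fls_eqI) (simp add: polyT_nth)
lemma polyT_const: "polyT [:a:] = fls_const a"
  by (rule fls_eqI) (simp add: polyT_nth coeff_pCons split: nat.split)
lemma polyT_1[simp]: "polyT 1 = 1"
  using polyT_const[of 1] by (simp add: one_pCons)
lemma polyT_smult: "polyT (smult a p) = fls_const a * polyT p"
  by (rule fls_eqI) (simp add: polyT_nth)
lemma polyT_pCons: "polyT (pCons a p) = fls_const a + fls_X_inv * polyT p"
proof (rule fls_eqI)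
  fix n :: int
  show "fls_nth (polyT (pCons a p)) n = fls_nth (fls_const a + fls_X_inv * polyT p) n"
  proof (cases "n + 1 \<le> 0")
    case True
    then have "nat (- n) = Suc (nat (- n - 1))" by simp
    then show ?thesis using True by (simp add: polyT_nth fls_X_inv_times_conv_shift)
  qed (auto simp: polyT_nth fls_X_inv_times_conv_shift coeff_pCons split: nat.split)
qed

lemma polyT_mult: "polyT (p * q) = polyT p * polyT q"
proof (induction p)
  case 0 then show ?case by simp
next
  case (pCons a p)
  have "polyT (pCons a p * q) = fls_const a * polyT q + fls_X_inv * polyT (p * q)"
    by (simp add: polyT_add polyT_smult polyT_pCons[of 0, simplified])
  also have "\<dots> = polyT (pCons a p) * polyT q"
    by (simp add: pCons.IH polyT_pCons algebra_simps)
  finally show ?case .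
qed

lemma polyT_power: "polyT (p ^ n) = polyT p ^ n"
  by (induction n) (simp_all add: polyT_mult)

lemma polyT_X: "polyT [:0,1:] = fls_X_inv"
  by (simp add: polyT_pCons polyT_const)

lemma polyT_subdeg: "p \<noteq> 0 \<Longrightarrow> polyT p \<noteq> 0 \<and> fls_subdegree (polyT p) = - int (degree p)"
proof -
  assume p: "p \<noteq> 0"
  have "fls_nth (polyT p) (- int (degree p)) \<noteq> 0" using p by (simp add: polyT_nth)
  moreover have "\<And>k. k < - int (degree p) \<Longrightarrow> fls_nth (polyT p) k = 0"
    by (auto simp: polyT_nth coeff_eq_0)
  ultimately show ?thesis using fls_nonzeroI fls_subdegree_eqI by metis
qed

lemma polyT_eq0_iff[simp]: "polyT p = 0 \<longleftrightarrow> p = 0"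
  using polyT_subdeg by auto

lemma polyT_inj: "polyT p = polyT q \<Longrightarrow> p = q"
  by (metis polyT_diff polyT_eq0_iff right_minus_eq)

lemma deg_polyT: "p \<noteq> 0 \<Longrightarrow> deg (polyT p) = ereal (real (degree p))"
  using polyT_subdeg by (simp add: deg_def)

lemma polypart: "\<exists>p. vanish (f - polyT p) 0"
proof
  let ?p = "fls_prpart f + [:fls_nth f 0:]"
  show "vanish (f - polyT ?p) 0"
    by (auto simp: vanish_def polyT_nth coeff_pCons split: nat.split)
qed



abbreviation F :: "(nat \<Rightarrow> rat poly) \<Rightarrow> nat \<Rightarrow> rat fls" where
  "F c n \<equiv> cfrac_fin (\<lambda>k. polyT (c k)) n"

lemma F_Suc: "F c (Suc n) = polyT (c 0) + inverse (F (\<lambda>k. c (Suc k)) n)"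
  by simp

lemma F_deg: "(\<forall>k. degree (c k) \<ge> 1) \<Longrightarrow> F c n \<noteq> 0 \<and> fls_subdegree (F c n) = - int (degree (c 0))"
proof (induction n arbitrary: c)
  case 0
  then have "c 0 \<noteq> 0" by (metis not_one_le_zero degree_0)
  then show ?case using polyT_subdeg by simp
next
  case (Suc n)
  let ?A = "F (\<lambda>k. c (Suc k)) n"
  have c0: "c 0 \<noteq> 0" using Suc.prems by (metis not_one_le_zero degree_0)
  have IH: "?A \<noteq> 0 \<and> fls_subdegree ?A = - int (degree (c 1))"
    using Suc.IH[of "\<lambda>k. c (Suc k)"] Suc.prems by simp
  have d1: "degree (c 1) \<ge> 1" "degree (c 0) \<ge> 1" using Suc.prems by auto
  have s: "fls_subdegree (polyT (c 0)) < fls_subdegree (inverse ?A)"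
    using IH polyT_subdeg[OF c0] d1 by simp
  have "fls_subdegree (polyT (c 0) + inverse ?A) = fls_subdegree (polyT (c 0))"
    by (rule fls_subdegree_add_eq1) (use c0 s in auto)
  moreover have "polyT (c 0) + inverse ?A \<noteq> 0"
  proof
    assume "polyT (c 0) + inverse ?A = 0"
    then have "polyT (c 0) = - inverse ?A" by (simp add: eq_neg_iff_add_eq_0)
    then have "fls_subdegree (polyT (c 0)) = fls_subdegree (inverse ?A)" by simp
    with s show False by simp
  qed
  ultimately show ?case using polyT_subdeg[OF c0] by (simp del: cfrac_fin.simps add: F_Suc)
qed

lemma F_head: "(\<forall>k\<ge>1. degree (c k) \<ge> 1) \<Longrightarrow> vanish (F c n - polyT (c 0)) 0"
proof (cases n)
  case (Suc m)
  assume h: "\<forall>k\<ge>1. degree (c k) \<ge> 1"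
  have "F (\<lambda>k. c (Suc k)) m \<noteq> 0 \<and> fls_subdegree (F (\<lambda>k. c (Suc k)) m) = - int (degree (c 1))"
    using F_deg[of "\<lambda>k. c (Suc k)" m] h by simp
  moreover have "degree (c 1) \<ge> 1" using h by simp
  ultimately show ?thesis using Suc
    by (intro vanish_subdegI) (simp del: cfrac_fin.simps add: F_Suc)
qed (simp add: vanish_def)

lemma F_cauchy: "(\<forall>k\<ge>1. degree (c k) \<ge> 1) \<Longrightarrow> vanish (F c n - F c m) (int (min n m))"
proof (induction n arbitrary: c m)
  case 0
  then show ?case using F_head[of c m] vanish_uminus[of "F c m - polyT (c 0)" 0] by simp
next
  case (Suc n)
  show ?case
  proof (cases m)
    case 0
    then show ?thesis using F_head[of c "Suc n"] Suc.prems by simp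
  next
    case (Suc m')
    let ?A = "F (\<lambda>k. c (Suc k)) n" and ?B = "F (\<lambda>k. c (Suc k)) m'"
    have h: "\<forall>k. 1 \<le> degree (c (Suc k))" using Suc.prems by auto
    have A: "?A \<noteq> 0 \<and> fls_subdegree ?A = - int (degree (c 1))"
      using F_deg[of "\<lambda>k. c (Suc k)" n] h by simp
    have B: "?B \<noteq> 0 \<and> fls_subdegree ?B = - int (degree (c 1))"
      using F_deg[of "\<lambda>k. c (Suc k)" m'] h by simp
    have d1: "degree (c 1) \<ge> 1" using h[rule_format, of 0] by simp
    have IH: "vanish (?A - ?B) (int (min n m'))"
      using Suc.IH[of "\<lambda>k. c (Suc k)" m'] Suc.prems by simp
    have eq: "F c (Suc n) - F c m = (?B - ?A) * (inverse ?A * inverse ?B)"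
      using A B Suc by (simp del: cfrac_fin.simps add: F_Suc field_simps)
    have "vanish ((?B - ?A) * (inverse ?A * inverse ?B)) (int (min n m') + 2)"
    proof (rule vanish_mult)
      show "vanish (?B - ?A) (int (min n m'))" using vanish_uminus[OF IH] by simp
      show "2 \<le> fls_subdegree (inverse ?A * inverse ?B)" using A B d1 by simp
    qed
    then show ?thesis using eq Suc by (auto elim: vanish_mono)
  qed
qed

definition L :: "(nat \<Rightarrow> rat poly) \<Rightarrow> rat fls" where
  "L c = Abs_fls (\<lambda>j. fls_nth (F c (nat j)) j)"

lemma L_nth: "fls_nth (L c) j = fls_nth (F c (nat j)) j"
  unfolding L_def
proof (rule nth_Abs_fls_lower_bound[of "- int (degree (c 0))"])
  show "\<forall>n < - int (degree (c 0)). fls_nth (F c (nat n)) n = 0"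
    by (auto simp: polyT_nth coeff_eq_0)
qed

lemma L_approx: "(\<forall>k\<ge>1. degree (c k) \<ge> 1) \<Longrightarrow> vanish (L c - F c n) (int n)"
  unfolding vanish_def
proof (intro allI impI)
  fix j assume h: "\<forall>k\<ge>1. degree (c k) \<ge> 1" and j: "j \<le> int n"
  have "vanish (F c (nat j) - F c n) (int (min (nat j) n))" using F_cauchy[OF h] .
  moreover have "j \<le> int (min (nat j) n)" using j by simp
  ultimately show "fls_nth (L c - F c n) j = 0"
    by (simp add: vanish_def L_nth)
qed

lemma cfrac_eq: assumes h: "\<forall>k\<ge>1. degree (c k) \<ge> 1" shows "cfrac c = L c"
  unfolding cfrac_def
proof (rule the_equality)
  show "\<forall>N::int. eventually (\<lambda>n. deg (L c - F c n) < ereal (of_int N)) sequentially"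
  proof
    fix N :: int
    show "eventually (\<lambda>n. deg (L c - F c n) < ereal (of_int N)) sequentially"
      unfolding eventually_sequentially deg_less_iff
      by (rule exI[of _ "nat (- N)"]) (auto intro: vanish_mono[OF L_approx[OF h]])
  qed
next
  fix g
  assume g: "\<forall>N::int. eventually (\<lambda>n. deg (g - F c n) < ereal (of_int N)) sequentially"
  have "vanish (g - L c) M" for M
  proof -
    have "eventually (\<lambda>n. deg (g - F c n) < ereal (of_int (- M))) sequentially" using g by blast
    then obtain n0 where n0: "\<forall>n\<ge>n0. vanish (g - F c n) M"
      unfolding eventually_sequentially deg_less_iff by auto
    define n where "n = max n0 (nat M)"
    have "vanish (g - F c n) M" using n0 n_def by simp
    moreover have "vanish (L c - F c n) M" using L_approx[OF h, of n] n_def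
      by (auto elim: vanish_mono)
    ultimately show ?thesis using vanish_diff by fastforce
  qed
  then show "g = L c" using vanish_zero_iff[of "g - L c"] by auto
qed

lemma cfrac_head: "(\<forall>k\<ge>1. degree (c k) \<ge> 1) \<Longrightarrow> vanish (cfrac c - polyT (c 0)) 0"
  using L_approx[of c 0] cfrac_eq[of c] by simp

lemma deg_add_small:
  assumes p: "p \<noteq> 0" and e: "vanish e 0"
  shows "deg (polyT p + e) = ereal (real (degree p))"
proof -
  have P: "polyT p \<noteq> 0 \<and> fls_subdegree (polyT p) = - int (degree p)" using polyT_subdeg[OF p] .
  have e0: "fls_nth e (- int (degree p)) = 0" using e by (simp add: vanish_def)
  have nz: "fls_nth (polyT p + e) (- int (degree p)) \<noteq> 0"
    using p e0 by (simp add: polyT_nth)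
  have "fls_subdegree (polyT p + e) = - int (degree p)"
  proof (rule fls_subdegree_eqI[OF nz])
    fix k assume "k < - int (degree p)"
    then show "fls_nth (polyT p + e) k = 0" using e by (simp add: vanish_def polyT_nth coeff_eq_0)
  qed
  then show ?thesis using fls_nonzeroI[OF nz] by (simp add: deg_def)
qed

lemma lambda_deg:
  assumes A: "\<forall>i. degree (A i) \<ge> 1"
  shows "deg (lambda_seq A i) = ereal (real (degree (A i)))"
proof -
  let ?c1 = "\<lambda>k. A (i + int k)" and ?c2 = "\<lambda>k::nat. if k = 0 then 0 else A (i - int k)"
  have v1: "vanish (cfrac ?c1 - polyT (A i)) 0" using cfrac_head[of ?c1] A by simp
  have v2: "vanish (cfrac ?c2) 0" using cfrac_head[of ?c2] A by simp
  have eq: "lambda_seq A i = polyT (A i) + ((cfrac ?c1 - polyT (A i)) + cfrac ?c2)"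
    by (simp add: lambda_seq_def)
  have "A i \<noteq> 0" using A by (metis not_one_le_zero degree_0)
  then show ?thesis unfolding eq by (rule deg_add_small[OF _ vanish_add[OF v1 v2]])
qed

lemma markovM_eq: "\<forall>i. degree (A i) \<ge> 1 \<Longrightarrow> markovM A = (SUP i. ereal (real (degree (A i))))"
  unfolding markovM_def using lambda_deg by simp



definition QF :: "rat fls \<Rightarrow> rat fls \<Rightarrow> rat fls \<Rightarrow> rat poly \<Rightarrow> rat poly \<Rightarrow> rat fls" where
  "QF a b c x y = a * polyT x^2 + b * polyT x * polyT y + c * polyT y^2"

lemma red:
  fixes s :: "rat fls"
  assumes s: "s \<noteq> 0"
  shows "\<forall>a b c. b^2 - 4*a*c = s^2 \<longrightarrow> (a = 0 \<or> fls_subdegree s - int n < fls_subdegree a) \<longrightarrow>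
    (\<exists>x y. (x,y) \<noteq> (0,0) \<and> vanish (QF a b c x y) (fls_subdegree s))"
proof (induction n)
  case 0
  show ?case
  proof (intro allI impI)
    fix a b c :: "rat fls"
    assume "a = 0 \<or> fls_subdegree s - int 0 < fls_subdegree a"
    then have "vanish (QF a b c 1 0) (fls_subdegree s)"
      by (auto simp: QF_def intro!: vanish_subdegI)
    moreover have "(1::rat poly, 0::rat poly) \<noteq> (0,0)" by simp
    ultimately show "\<exists>x y. (x,y) \<noteq> (0,0) \<and> vanish (QF a b c x y) (fls_subdegree s)" by blast
  qed
next
  case (Suc n)
  define \<sigma> where "\<sigma> = fls_subdegree s"
  show ?case
  proof (intro allI impI)
    fix a b c :: "rat fls"
    assume D: "b^2 - 4*a*c = s^2" and ha: "a = 0 \<or> fls_subdegree s - int (Suc n) < fls_subdegree a"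
    show "\<exists>x y. (x,y) \<noteq> (0,0) \<and> vanish (QF a b c x y) (fls_subdegree s)"
    proof (cases "a = 0 \<or> \<sigma> < fls_subdegree a")
      case True
      then have "vanish (QF a b c 1 0) (fls_subdegree s)"
        by (auto simp: QF_def \<sigma>_def intro!: vanish_subdegI)
      moreover have "(1::rat poly, 0::rat poly) \<noteq> (0,0)" by simp
      ultimately show ?thesis by blast
    next
      case False
      then have a0: "a \<noteq> 0" and ka: "fls_subdegree a \<le> \<sigma>" by auto
      define k where "k = fls_subdegree a"
      have kn: "\<sigma> - int n \<le> k" using ha a0 unfolding k_def \<sigma>_def by simp
      obtain p where p: "vanish (- b / (2*a) - polyT p) 0" using polypart by blast
      define P where "P = polyT p"
      define b' where "b' = b + 2*a*P"
      define c' where "c' = a*P^2 + b*P + c"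
      have b'eq: "b' = (- b / (2*a) - P) * (- (2*a))"
        using a0 by (simp add: b'_def P_def field_simps)
      have vb': "vanish b' k"
        unfolding b'eq using vanish_mult[OF p[folded P_def], of "- (2*a)" k] a0
        by (simp add: k_def)
      have D': "b'^2 - 4*a*c' = s^2"
        using D unfolding b'_def c'_def by (simp add: algebra_simps power2_eq_square)
      show ?thesis
      proof (cases "c' = 0 \<or> k < fls_subdegree c'")
        case True
        have D2: "b'^2 - 4*c'*a = s^2" using D' by (simp add: algebra_simps)
        have hc0: "c' = 0 \<or> \<sigma> - int n < fls_subdegree c'"
          using True kn by auto
        have hc: "c' = 0 \<or> fls_subdegree s - int n < fls_subdegree c'"
          using hc0 unfolding \<sigma>_def .
        have "\<exists>x y. (x,y) \<noteq> (0,0) \<and> vanish (QF c' b' a x y) (fls_subdegree s)"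
          using Suc.IH D2 hc by blast
        then obtain x y where xy: "(x,y) \<noteq> (0,0)" "vanish (QF c' b' a x y) (fls_subdegree s)"
          by blast
        have eqQF: "QF a b c (y + p*x) x = QF c' b' a x y"
          unfolding QF_def b'_def c'_def P_def
          by (simp add: polyT_add polyT_mult algebra_simps power2_eq_square)
        have v: "vanish (QF a b c (y + p*x) x) (fls_subdegree s)" using xy(2) unfolding eqQF .
        have nz: "(y + p*x, x) \<noteq> (0,0)" using xy(1) by auto
        show ?thesis using v nz by blast
      next
        case False
        then have c0: "c' \<noteq> 0" and mk: "fls_subdegree c' \<le> k" by auto
        define m where "m = fls_subdegree c'"
        have 4: "(4::rat fls) \<noteq> 0" by simp
        have nz4: "4*a*c' \<noteq> 0" using a0 c0 by simp
        have sd4: "fls_subdegree (4*a*c') = k + m"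
          using a0 c0 by (simp add: k_def m_def)
        have co4: "fls_nth (4*a*c') (k + m) = 4 * fls_nth a k * fls_nth c' m"
          using fls_times_base[of "4*a" c'] a0 c0 by (simp add: k_def m_def)
        have vb2: "vanish (b'^2) (2*k+1)"
        proof -
          have "vanish (b' * b') (k + (k+1))"
            by (rule vanish_mult[OF vb']) (use vb' in \<open>auto simp: vanish_subdeg\<close>)
          then show ?thesis by (simp add: power2_eq_square algebra_simps)
        qed
        have cs: "fls_nth (s^2) j = fls_nth (b'^2) j - fls_nth (4*a*c') j" for j
          using D' by (metis fls_minus_nth)
        have nzj: "fls_nth (s^2) (k+m) \<noteq> 0"
          using cs[of "k+m"] co4 vb2 mk a0 c0 by (simp add: vanish_def k_def m_def)
        have "fls_subdegree (s^2) = k + m"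
        proof (rule fls_subdegree_eqI[OF nzj])
          fix j assume "j < k + m"
          then show "fls_nth (s^2) j = 0" using cs[of j] vb2 sd4 mk m_def
            by (simp add: vanish_def)
        qed
        moreover have "fls_subdegree (s^2) = 2*\<sigma>" using s by (simp add: \<sigma>_def power2_eq_square)
        ultimately have km: "k = \<sigma>" "m = \<sigma>" using mk ka m_def k_def by auto
        have lead: "(fls_nth s \<sigma>)^2 = - 4 * fls_nth a \<sigma> * fls_nth c' \<sigma>"
        proof -
          have e1: "fls_nth (s*s) (\<sigma> + \<sigma>) = fls_nth s \<sigma> * fls_nth s \<sigma>"
            unfolding \<sigma>_def by (rule fls_times_base)
          have "fls_nth (s^2) (2*\<sigma>) = (fls_nth s \<sigma>)^2"
            using e1 by (simp only: power2_eq_square mult_2)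
          moreover have "fls_nth (s^2) (2*\<sigma>) = - 4 * fls_nth a \<sigma> * fls_nth c' \<sigma>"
          proof -
            have b0: "fls_nth (b'^2) (2*\<sigma>) = 0" using vb2 unfolding vanish_def km(1) by simp
            have co4': "fls_nth (4*a*c') (2*\<sigma>) = 4 * fls_nth a \<sigma> * fls_nth c' \<sigma>"
              using co4 unfolding km mult_2[symmetric] .
            show ?thesis using cs[of "2*\<sigma>"] b0 co4' by simp
          qed
          ultimately show ?thesis by simp
        qed
        have sa: "fls_subdegree a = \<sigma>" using km(1) k_def by simp
        have as0: "fls_nth a \<sigma> \<noteq> 0" using nth_fls_subdegree_nonzero[OF a0] unfolding sa .
        define t where "t = fls_nth s \<sigma> / (2 * fls_nth a \<sigma>)"
        have eqQ: "QF a b c ([:t:] + p) 1 = fls_const (t^2) * a + fls_const t * b' + c'"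
          unfolding QF_def b'_def c'_def P_def
          by (simp add: polyT_add polyT_const fls_const_power algebra_simps power2_eq_square)
        have "vanish (fls_const (t^2) * a + fls_const t * b' + c') \<sigma>"
          unfolding vanish_def
        proof (intro allI impI)
          fix j assume j: "j \<le> \<sigma>"
          show "fls_nth (fls_const (t^2) * a + fls_const t * b' + c') j = 0"
          proof (cases "j = \<sigma>")
            case True
            have "t^2 * fls_nth a \<sigma> + fls_nth c' \<sigma> = 0"
              using lead as0 unfolding t_def by (simp add: field_simps power2_eq_square)
            then show ?thesis using True vb' km by (simp add: vanish_def)
          next
            case False
            then have "j < \<sigma>" using j by simp
            then show ?thesis using vb' km k_def m_def by (simp add: vanish_def)
          qed
        qed
        then have "vanish (QF a b c ([:t:] + p) 1) (fls_subdegree s)" using eqQ \<sigma>_def by simp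
        moreover have "([:t:] + p, 1::rat poly) \<noteq> (0,0)" by simp
        ultimately show ?thesis by blast
      qed
    qed
  qed
qed



definition Pk :: "nat \<Rightarrow> rat poly" where
  "Pk k = [:0,1:]^(2*k-1) * [:1,1:]"

definition sk :: "nat \<Rightarrow> rat fls" where
  "sk k = fls_X_inv^k * fps_to_fls (fps_binomial (1/2))"

lemma Pk_nz: "Pk k \<noteq> 0"
proof -
  have h1: "([:0,1:]::rat poly)^(2*k-1) \<noteq> 0" by simp
  have h2: "([:1,1:]::rat poly) \<noteq> 0" by simp
  show ?thesis unfolding Pk_def using h1 h2 by (metis mult_eq_0_iff)
qed

lemma order_Pk: "k \<ge> 1 \<Longrightarrow> order 0 (Pk k) = 2*k-1"
proof -
  assume k: "k \<ge> 1"
  have o1: "order 0 ([:0,1:]^(2*k-1) :: rat poly) = 2*k-1"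
    using order_power_n_n[of "0::rat" "2*k-1"] by simp
  have o2: "order 0 ([:1,1:] :: rat poly) = 0"
    by (rule order_0I) simp
  show ?thesis unfolding Pk_def
    by (simp only: order_mult[OF Pk_nz[unfolded Pk_def]] o1 o2 add_0_right)
qed

lemma nonsquare: assumes k: "k \<ge> 1" and q: "q \<noteq> 0" and eq: "p^2 = Pk k * q^2" shows False
proof -
  have pq: "Pk k * q^2 \<noteq> 0" using q Pk_nz by simp
  then have p: "p \<noteq> 0" using eq by auto
  have "order 0 (p^2) = 2 * order 0 p"
    using p by (simp add: power2_eq_square order_mult)
  moreover have "order 0 (Pk k * q^2) = (2*k-1) + 2 * order 0 q"
    using q pq order_Pk[OF k] by (simp add: power2_eq_square order_mult)
  ultimately have "2 * order 0 p = (2*k-1) + 2 * order 0 q" using eq by simp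
  then show False using k by presburger
qed

lemma binom_half_sq: "(fps_binomial (1/2::rat))^2 = 1 + fps_X"
proof -
  have "fps_binomial (1/2 + 1/2 :: rat) = fps_binomial (1/2) * fps_binomial (1/2)"
    by (rule fps_binomial_add_mult)
  then show ?thesis by (simp add: power2_eq_square fps_binomial_1)
qed

lemma sk_sq: "k \<ge> 1 \<Longrightarrow> (sk k)^2 = polyT (Pk k)"
proof -
  assume k: "k \<ge> 1"
  have "(sk k)^2 = fls_X_inv^(2*k) * fps_to_fls ((fps_binomial (1/2::rat))^2)"
  proof -
    have "((fls_X_inv::rat fls)^k)^2 = fls_X_inv^(2*k)" by (metis power_mult mult.commute)
    then show ?thesis unfolding sk_def by (simp only: power_mult_distrib fps_to_fls_power)
  qed
  also have "\<dots> = fls_X_inv^(2*k) * (1 + fls_X)"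
    by (simp add: binom_half_sq)
  also have "\<dots> = fls_X_inv^(2*k-1) * (fls_X_inv + fls_X_inv * fls_X)"
  proof -
    have "(fls_X_inv::rat fls)^(2*k) = fls_X_inv^(2*k-1) * fls_X_inv"
    proof -
      have e: "2*k = Suc (2*k-1)" using k by simp
      show ?thesis using power_Suc2[of "fls_X_inv::rat fls" "2*k-1"] unfolding e[symmetric] .
    qed
    then show ?thesis by (simp add: algebra_simps)
  qed
  also have "\<dots> = fls_X_inv^(2*k-1) * (fls_X_inv + 1)"
    by (simp add: fls_X_inv_times_conv_shift)
  also have "\<dots> = polyT (Pk k)"
    unfolding Pk_def by (simp only: polyT_mult polyT_power polyT_X) (simp add: polyT_pCons polyT_const add.commute)
  finally show ?thesis .
qed

lemma sk_subdeg: "sk k \<noteq> 0 \<and> fls_subdegree (sk k) = - int k"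
proof -
  have B: "fps_binomial (1/2::rat) $ 0 = 1" by simp
  have nz: "fps_binomial (1/2::rat) \<noteq> 0"
  proof
    assume "fps_binomial (1/2::rat) = 0"
    then have "fps_binomial (1/2::rat) $ 0 = 0" by simp
    with B show False by simp
  qed
  have "subdegree (fps_binomial (1/2::rat)) = 0" using B by simp
  then show ?thesis unfolding sk_def using nz
    by (simp add: fls_subdegree_fls_to_fps)
qed

lemma deg_sk: "deg (sk k) = ereal (real k)"
  using sk_subdeg[of k] by (simp add: deg_def)

lemma sk_irrational: assumes k: "k \<ge> 1" shows "sk k \<notin> ratfunT"
proof
  assume "sk k \<in> ratfunT"
  then obtain p q where q: "q \<noteq> 0" and e: "sk k = polyT p / polyT q"
    unfolding ratfunT_def by blast
  have "polyT q \<noteq> 0" using q by simp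
  then have "sk k * polyT q = polyT p" using e by simp
  then have "(sk k)^2 * (polyT q)^2 = (polyT p)^2" by (metis power_mult_distrib)
  then have "polyT (Pk k * q^2) = polyT (p^2)" using sk_sq[OF k] by (simp add: polyT_mult polyT_power)
  then have "p^2 = Pk k * q^2" using polyT_inj by metis
  then show False using nonsquare[OF k q] by blast
qed

lemma nonzero_form: assumes k: "k \<ge> 1" and xy: "(x,y) \<noteq> (0::rat poly, 0)"
  shows "x^2 - Pk k * y^2 \<noteq> 0"
proof
  assume h: "x^2 - Pk k * y^2 = 0"
  show False
  proof (cases "y = 0")
    case True
    then show False using h xy by simp
  next
    case False
    then show False using nonsquare[OF k False, of x] h by simp
  qed
qed

lemma deg_ge: "r \<noteq> 0 \<Longrightarrow> deg (sk k * polyT r) \<ge> ereal (real k)"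
  using sk_subdeg[of k] polyT_subdeg[of r] by (simp add: deg_def)

lemma min_form_k:
  assumes k: "k \<ge> 1"
  shows "min_form (sk k) 0 (- sk k * polyT (Pk k)) = ereal (real k)"
proof (rule antisym)
  let ?f = "\<lambda>xy. deg (sk k * polyT (fst xy)^2 + 0 * polyT (fst xy) * polyT (snd xy) + (- sk k * polyT (Pk k)) * polyT (snd xy)^2)"
  have "min_form (sk k) 0 (- sk k * polyT (Pk k)) \<le> ?f (1,0)"
    unfolding min_form_def by (rule INF_lower) simp
  also have "?f (1,0) = ereal (real k)" by (simp add: deg_sk)
  finally show "min_form (sk k) 0 (- sk k * polyT (Pk k)) \<le> ereal (real k)" .
  show "ereal (real k) \<le> min_form (sk k) 0 (- sk k * polyT (Pk k))"
    unfolding min_form_def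
  proof (rule INF_greatest)
    fix xy :: "rat poly \<times> rat poly" assume "xy \<in> {(x, y). (x, y) \<noteq> (0, 0)}"
    then obtain x y where xy: "xy = (x,y)" "(x,y) \<noteq> (0,0)" by auto
    have "?f xy = deg (sk k * polyT (x^2 - Pk k * y^2))"
      unfolding xy by (simp add: polyT_diff polyT_mult polyT_power algebra_simps)
    also have "\<dots> \<ge> ereal (real k)" by (rule deg_ge[OF nonzero_form[OF k xy(2)]])
    finally show "ereal (real k) \<le> ?f xy" .
  qed
qed

lemma form_k:
  assumes k: "k \<ge> 1"
  shows "ereal (real k) \<in> markov_spectrum"
proof -
  let ?a = "sk k" and ?b = "0::rat fls" and ?c = "- sk k * polyT (Pk k)"
  have D: "disc ?a ?b ?c = (2 * (sk k)^2)^2"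
    unfolding disc_def using sk_sq[OF k] by (simp add: power2_eq_square algebra_simps)
  have s0: "sk k \<noteq> 0" using sk_subdeg by blast
  have "fls_subdegree (2 * (sk k)^2) = - 2 * int k"
    using sk_subdeg[of k] by (simp add: power2_eq_square)
  then have dD: "deg (disc ?a ?b ?c) = ereal (real (4*k))"
    unfolding D using s0 by (simp add: deg_def power2_eq_square)
  have ind: "indefinite ?a ?b ?c" unfolding indefinite_def
  proof (intro conjI)
    show "disc ?a ?b ?c \<noteq> 0" unfolding D using s0 by simp
    show "\<exists>s. s^2 = disc ?a ?b ?c" by (rule exI[of _ "2 * (sk k)^2"], rule D[symmetric])
  qed
  have form: "is_form ?a ?b ?c" unfolding is_form_def using sk_irrational[OF k] by blast
  have "deg (disc ?a ?b ?c) / 2 - min_form ?a ?b ?c = ereal (real k)"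
    unfolding dD min_form_k[OF k] by simp
  then show ?thesis unfolding markov_spectrum_def mem_Collect_eq
    by (intro exI[of _ ?a] exI[of _ ?b] exI[of _ ?c] conjI) (rule sym, assumption, rule form, rule ind)
qed

lemma form_inf: "\<infinity> \<in> markov_spectrum"
proof -
  define s1 where "s1 = sk 1"
  have s0: "s1 \<noteq> 0" using sk_subdeg[of 1] unfolding s1_def by simp
  have irr: "s1 \<notin> ratfunT" using sk_irrational[of 1] s1_def by simp
  let ?a = "0::rat fls" and ?b = "s1" and ?c = "0::rat fls"
  have D: "disc ?a ?b ?c = s1^2" unfolding disc_def by simp
  have ind: "indefinite ?a ?b ?c" unfolding indefinite_def
  proof (intro conjI)
    show "disc ?a ?b ?c \<noteq> 0" unfolding D using s0 by simp
    show "\<exists>s. s^2 = disc ?a ?b ?c" by (rule exI[of _ s1], rule D[symmetric])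
  qed
  have form: "is_form ?a ?b ?c" unfolding is_form_def using irr by simp
  have "min_form ?a ?b ?c \<le> deg (?a * polyT 1^2 + ?b * polyT 1 * polyT 0 + ?c * polyT 0^2)"
    unfolding min_form_def by (rule INF_lower2[of "(1,0)"]) auto
  then have m: "min_form ?a ?b ?c = -\<infinity>" by (simp add: deg_def)
  have "disc ?a ?b ?c \<noteq> 0" unfolding D using s0 by simp
  then have "deg (disc ?a ?b ?c) \<noteq> -\<infinity>" by (simp add: deg_def)
  then have "deg (disc ?a ?b ?c) / 2 - min_form ?a ?b ?c = \<infinity>"
    unfolding m by (cases "deg (disc ?a ?b ?c)") auto
  then show ?thesis unfolding markov_spectrum_def mem_Collect_eq
    by (intro exI[of _ ?a] exI[of _ ?b] exI[of _ ?c] conjI) (rule sym, assumption, rule form, rule ind)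
qed



lemma inf_int:
  fixes f :: "'a \<Rightarrow> ereal"
  assumes h: "\<And>x. x \<in> S \<Longrightarrow> f x = -\<infinity> \<or> (\<exists>z::int. f x = ereal (of_int z))"
    and m1: "(INF x\<in>S. f x) \<noteq> -\<infinity>" and m2: "(INF x\<in>S. f x) \<noteq> \<infinity>"
  shows "\<exists>z::int. (INF x\<in>S. f x) = ereal (of_int z)"
proof -
  define m where "m = (INF x\<in>S. f x)"
  obtain r where r: "m = ereal r" using m1 m2 unfolding m_def[symmetric] by (cases m) auto
  have "m < ereal (r+1)" using r by simp
  then obtain x where x: "x \<in> S" "f x < ereal (r+1)" unfolding m_def by (auto simp: INF_less_iff)
  have mx: "m \<le> f x" unfolding m_def by (rule INF_lower[OF x(1)])
  then have "f x \<noteq> -\<infinity>" using r by auto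
  then obtain z where z: "f x = ereal (of_int z)" using h[OF x(1)] by auto
  have zr: "of_int z < r + 1" using x(2) z by simp
  have "ereal (of_int z) \<le> m" unfolding m_def
  proof (rule INF_greatest)
    fix y assume y: "y \<in> S"
    have my: "m \<le> f y" unfolding m_def by (rule INF_lower[OF y])
    then have "f y \<noteq> -\<infinity>" using r by auto
    then obtain w where w: "f y = ereal (of_int w)" using h[OF y] by auto
    have "r \<le> of_int w" using my r w by simp
    then have "real_of_int z < real_of_int (w + 1)" using zr by simp
    then have "z \<le> w" by (simp only: of_int_less_iff)
    then show "ereal (of_int z) \<le> f y" using w by simp
  qed
  moreover have "m \<le> ereal (of_int z)" using mx z by simp
  ultimately have "m = ereal (of_int z)" by (rule antisym[rotated])
  then show ?thesis unfolding m_def by blast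
qed

lemma lhs_val:
  assumes ind: "indefinite a b c"
  shows "deg (disc a b c) / 2 - min_form a b c = \<infinity> \<or>
    (\<exists>k::nat. k \<ge> 1 \<and> deg (disc a b c) / 2 - min_form a b c = ereal (real k))"
proof -
  obtain s where s: "s^2 = disc a b c" and D0: "disc a b c \<noteq> 0"
    using ind unfolding indefinite_def by auto
  have s0: "s \<noteq> 0" using s D0 by auto
  define \<sigma> where "\<sigma> = fls_subdegree s"
  define n where "n = nat (\<sigma> - fls_subdegree a + 1)"
  have ha: "a = 0 \<or> fls_subdegree s - int n < fls_subdegree a" unfolding n_def \<sigma>_def by auto
  have hD: "b^2 - 4*a*c = s^2" using s unfolding disc_def by simp
  have "\<exists>x y. (x,y) \<noteq> (0,0) \<and> vanish (QF a b c x y) (fls_subdegree s)"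
    using red[OF s0, of n] hD ha by blast
  then obtain x y where xy: "(x,y) \<noteq> (0,0)" "vanish (QF a b c x y) \<sigma>"
    unfolding \<sigma>_def by blast
  have dlt: "deg (QF a b c x y) < ereal (of_int (- \<sigma>))"
    using deg_less_iff[of "QF a b c x y" "- \<sigma>"] xy(2) by simp
  have mle: "min_form a b c \<le> deg (QF a b c x y)"
    unfolding min_form_def QF_def by (rule INF_lower2[of "(x,y)"]) (use xy(1) in auto)
  have mlt: "min_form a b c < ereal (of_int (- \<sigma>))" using mle dlt by (rule le_less_trans)
  have dD: "deg (disc a b c) / 2 = ereal (of_int (- \<sigma>))"
  proof -
    have "fls_subdegree (disc a b c) = \<sigma> + \<sigma>" unfolding s[symmetric] \<sigma>_def
      using s0 by (simp add: power2_eq_square)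
    then show ?thesis using D0 by (simp add: deg_def)
  qed
  show ?thesis
  proof (cases "min_form a b c = -\<infinity>")
    case True
    then show ?thesis using dD by simp
  next
    case False
    have ninf: "min_form a b c \<noteq> \<infinity>" using mlt by auto
    have "\<exists>z::int. min_form a b c = ereal (of_int z)"
      unfolding min_form_def
    proof (rule inf_int)
      show "(INF xy\<in>{(x, y). (x, y) \<noteq> (0::rat poly, 0::rat poly)}.
          deg (a * polyT (fst xy)^2 + b * polyT (fst xy) * polyT (snd xy) + c * polyT (snd xy)^2)) \<noteq> -\<infinity>"
        using False unfolding min_form_def .
      show "(INF xy\<in>{(x, y). (x, y) \<noteq> (0::rat poly, 0::rat poly)}.
          deg (a * polyT (fst xy)^2 + b * polyT (fst xy) * polyT (snd xy) + c * polyT (snd xy)^2)) \<noteq> \<infinity>"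
        using ninf unfolding min_form_def .
    qed (rule deg_cases)
    then obtain z :: int where z: "min_form a b c = ereal (of_int z)" by blast
    have zs: "z < - \<sigma>" using mlt z by simp
    have "deg (disc a b c) / 2 - min_form a b c = ereal (real (nat (- \<sigma> - z)))"
      using dD z zs by simp
    moreover have "nat (- \<sigma> - z) \<ge> 1" using zs by simp
    ultimately show ?thesis by blast
  qed
qed

lemma sup_cases:
  fixes f :: "int \<Rightarrow> nat" assumes f1: "\<forall>i. f i \<ge> 1"
  shows "(SUP i. ereal (real (f i))) = \<infinity> \<or> (\<exists>k::nat. k \<ge> 1 \<and> (SUP i. ereal (real (f i))) = ereal (real k))"
proof (cases "finite (range f)")
  case True
  define k where "k = Max (range f)"
  have "k \<in> range f" unfolding k_def using True by (intro Max_in) auto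
  then obtain i0 where i0: "f i0 = k" by auto
  have le: "f i \<le> k" for i unfolding k_def using True by (intro Max_ge) auto
  have "(SUP i. ereal (real (f i))) = ereal (real k)"
  proof (rule antisym)
    show "(SUP i. ereal (real (f i))) \<le> ereal (real k)" by (rule SUP_least) (simp add: le)
    show "ereal (real k) \<le> (SUP i. ereal (real (f i)))"
      using SUP_upper[of i0 UNIV "\<lambda>i. ereal (real (f i))"] i0 by simp
  qed
  moreover have "k \<ge> 1" using f1 i0 by metis
  ultimately show ?thesis by blast
next
  case False
  have "(SUP i. ereal (real (f i))) = \<infinity>"
  proof (rule SUP_PInfty)
    fix n :: nat
    have "\<not> (\<forall>i. f i \<le> n)"
    proof
      assume "\<forall>i. f i \<le> n"
      then have "finite (range f)" unfolding finite_nat_set_iff_bounded_le by auto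
      with False show False by simp
    qed
    then obtain i where i: "n < f i" by (auto simp: not_le)
    show "\<exists>i\<in>UNIV. ereal (real n) \<le> ereal (real (f i))"
      by (rule bexI[of _ i]) (use i in auto)
  qed
  then show ?thesis by simp
qed

lemma markovM_const: "k \<ge> 1 \<Longrightarrow> markovM (\<lambda>i::int. monom (1::rat) k) = ereal (real k)"
  using markovM_eq[of "\<lambda>i. monom 1 k"] by (simp add: degree_monom_eq)

lemma markovM_inf: "markovM (\<lambda>i::int. monom (1::rat) (nat \<bar>i\<bar> + 1)) = \<infinity>"
proof -
  have "markovM (\<lambda>i::int. monom (1::rat) (nat \<bar>i\<bar> + 1)) = (SUP i. ereal (real (nat \<bar>i\<bar> + 1)))"
    using markovM_eq[of "\<lambda>i::int. monom (1::rat) (nat \<bar>i\<bar> + 1)"] by (simp add: degree_monom_eq)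
  also have "\<dots> = \<infinity>"
  proof (rule SUP_PInfty)
    fix n :: nat
    show "\<exists>i\<in>UNIV. ereal (real n) \<le> ereal (real (nat \<bar>i\<bar> + 1))"
      by (rule bexI[of _ "int n"]) auto
  qed
  finally show ?thesis .
qed

theorem theorem10:
  shows "markov_spectrum = {markovM A | A. \<forall>i. degree (A i) \<ge> 1}"
proof (rule set_eqI, rule iffI)
  fix v assume "v \<in> markov_spectrum"
  then obtain a b c where v: "v = deg (disc a b c) / 2 - min_form a b c" and ind: "indefinite a b c"
    unfolding markov_spectrum_def by blast
  from lhs_val[OF ind] v have "v = \<infinity> \<or> (\<exists>k::nat. k \<ge> 1 \<and> v = ereal (real k))" by simp
  then show "v \<in> {markovM A | A. \<forall>i. degree (A i) \<ge> 1}"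
  proof
    assume "v = \<infinity>"
    moreover have "\<forall>i::int. degree (monom (1::rat) (nat \<bar>i\<bar> + 1)) \<ge> 1"
      by (simp add: degree_monom_eq)
    ultimately have "v = markovM (\<lambda>i::int. monom (1::rat) (nat \<bar>i\<bar> + 1)) \<and>
        (\<forall>i::int. degree (monom (1::rat) (nat \<bar>i\<bar> + 1)) \<ge> 1)" using markovM_inf by simp
    then show ?thesis by blast
  next
    assume "\<exists>k::nat. k \<ge> 1 \<and> v = ereal (real k)"
    then obtain k :: nat where k: "k \<ge> 1" "v = ereal (real k)" by blast
    have "\<forall>i::int. degree (monom (1::rat) k) \<ge> 1" using k by (simp add: degree_monom_eq)
    then have "v = markovM (\<lambda>i::int. monom (1::rat) k) \<and>
        (\<forall>i::int. degree (monom (1::rat) k) \<ge> 1)" using markovM_const[OF k(1)] k(2) by simp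
    then show ?thesis by blast
  qed
next
  fix v assume "v \<in> {markovM A | A. \<forall>i. degree (A i) \<ge> 1}"
  then obtain A where v: "v = markovM A" and A: "\<forall>i. degree (A i) \<ge> 1" by blast
  have "v = (SUP i. ereal (real (degree (A i))))" using markovM_eq[OF A] v by simp
  with sup_cases[of "\<lambda>i. degree (A i)"] A
  have "v = \<infinity> \<or> (\<exists>k::nat. k \<ge> 1 \<and> v = ereal (real k))" by simp
  then show "v \<in> markov_spectrum" using form_inf form_k by blast
qed

end
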